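(* Let $\gamma:[0,1]\to\mathbb{R}^2$ be a $C^1$ curve of constant speed $c>0$ with $\gamma(0)\neq\gamma(1)$, whose turning angle function $\theta$ satisfies $\theta(1)-\theta(0)=2\pi m$ with $0\neq m\in\mathbb{Z}$. Let $k\ge 2$ and $z_h\in Z_k$. Then there are no cuts $C\in D_k$ such that $r_{z_h,C}$ is closed, i.e. $r_{z_h,C}(0)\neq r_{z_h,C}(1)$ for all $C\in D_k$.
   Context: A turning angle function is a continuous $\theta$ with $\gamma'(s)=c(\cos\theta(s),\sin\theta(s))$. Concatenation $\alpha*\beta$ of two $C^1$ planar curves of the same constant speed ($\alpha$ on $[a_1,b_1]$, $\beta$ on $[a_2,b_2]$) is the curve on $[0,(b_1-a_1)+(b_2-a_2)]$ equal to $\alpha(s+a_1)$ for $s\le b_1-a_1$ and to $T(\beta(s-(b_1-a_1)+a_2))$ afterwards, where $T$ is the orientation-preserving rigid motion sending $\beta(a_2)$ to $\alpha(b_1)$ and the unit tangent of $\beta$ at $a_2$ to that of $\alpha$ at $b_1$; it is associative. Let $D_k=\{(c_1,\dots,c_{k-1})\in[0,1]^{k-1}: 0\le c_1\le\dots\le c_{k-1}\le 1\}$; set $c_0=0$, $c_k=1$. For $C\in D_k$ let $\gamma_i$ be the restriction of $\gamma$ to $[c_{i-1},c_i]$ (a degenerate arc is a point carrying the tangent direction of $\gamma$ there). For $\sigma\in S_k$, $r_{\sigma,C}:=\gamma_{\sigma(1)}*\dots*\gamma_{\sigma(k)}$ parametrized over $[0,1]$. $Z_k=\{z_0,\dots,z_{k-1}\}$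 with $z_h(i)=i+h$ if $i\le k-h$ and $z_h(i)=i+h-k$ if $i>k-h$. *)

theory Defs
  imports "HOL-Analysis.Analysis"
begin

text \<open>Planar curves are modelled as complex-valued functions (complex plane = R^2).
  An arc is a tuple (f, u, a, b): the curve f restricted to [a,b], together with its
  unit tangent function u (so a degenerate arc a = b still carries a tangent direction).\<close>

type_synonym arc = "(real \<Rightarrow> complex) \<times> (real \<Rightarrow> complex) \<times> real \<times> real"

definition turning_angle :: "(real \<Rightarrow> complex) \<Rightarrow> real \<Rightarrow> (real \<Rightarrow> real) \<Rightarrow> bool" where
  "turning_angle \<gamma> c \<theta> \<longleftrightarrow> continuous_on {0..1} \<theta> \<and>
     (\<forall>s\<in>{0..1}. (\<gamma> has_vector_derivative (complex_of_real c * cis (\<theta> s))) (at s within {0..1}))"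

text \<open>Concatenation: the second arc is moved by the orientation-preserving rigid motion
  z \<mapsto> f1 b1 + rot * (z - f2 a2), rot = u1 b1 / u2 a2 (a unit complex number), sending
  the start point and start tangent of the second arc to the end point and end tangent of the first.\<close>
definition concat_arc :: "arc \<Rightarrow> arc \<Rightarrow> arc" where
  "concat_arc A B = (case A of (f1, u1, a1, b1) \<Rightarrow> case B of (f2, u2, a2, b2) \<Rightarrow>
     (let L1 = b1 - a1; L2 = b2 - a2; rot = u1 b1 / u2 a2;
          T = (\<lambda>z. f1 b1 + rot * (z - f2 a2))
      in ((\<lambda>s. if s \<le> L1 then f1 (s + a1) else T (f2 (s - L1 + a2))),
          (\<lambda>s. if s \<le> L1 then u1 (s + a1) else rot * u2 (s - L1 + a2)),
          0, L1 + L2)))"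

fun concat_list :: "arc list \<Rightarrow> arc" where
  "concat_list [] = ((\<lambda>_. 0), (\<lambda>_. 1), 0, 0)"
| "concat_list [A] = A"
| "concat_list (A # B # As) = concat_arc A (concat_list (B # As))"

text \<open>D_k: cuts C with 0 \<le> C 1 \<le> ... \<le> C (k-1) \<le> 1 (only indices 1..k-1 matter).\<close>
definition cuts :: "nat \<Rightarrow> (nat \<Rightarrow> real) set" where
  "cuts k = {C. \<forall>i j. 1 \<le> i \<longrightarrow> i \<le> j \<longrightarrow> j \<le> k - 1 \<longrightarrow> 0 \<le> C i \<and> C i \<le> C j \<and> C j \<le> 1}"

definition cut_pt :: "(nat \<Rightarrow> real) \<Rightarrow> nat \<Rightarrow> nat \<Rightarrow> real" where
  "cut_pt C k i = (if i = 0 then 0 else if i \<ge> k then 1 else C i)"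

definition arc_piece :: "(real \<Rightarrow> complex) \<Rightarrow> (real \<Rightarrow> real) \<Rightarrow> (nat \<Rightarrow> real) \<Rightarrow> nat \<Rightarrow> nat \<Rightarrow> arc" where
  "arc_piece \<gamma> \<theta> C k i = (\<gamma>, (\<lambda>s. cis (\<theta> s)), cut_pt C k (i - 1), cut_pt C k i)"

definition r_perm :: "(real \<Rightarrow> complex) \<Rightarrow> (real \<Rightarrow> real) \<Rightarrow> (nat \<Rightarrow> nat) \<Rightarrow> nat \<Rightarrow> (nat \<Rightarrow> real) \<Rightarrow> real \<Rightarrow> complex" where
  "r_perm \<gamma> \<theta> \<sigma> k C = (case concat_list (map (\<lambda>j. arc_piece \<gamma> \<theta> C k (\<sigma> j)) [1..<k+1]) of
      (g, v, a, b) \<Rightarrow> (\<lambda>s. g (a + s * (b - a))))"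

definition zshift :: "nat \<Rightarrow> nat \<Rightarrow> nat \<Rightarrow> nat" where
  "zshift k h i = (if i \<le> k - h then i + h else i + h - k)"

end

theory Submission
  imports Defs
begin

definition good :: "arc \<Rightarrow> complex \<times> real \<Rightarrow> complex \<times> real \<Rightarrow> bool" where
  "good A X Y = (case A of (g, v, a, b) \<Rightarrow> case X of (P1, T1) \<Rightarrow> case Y of (P2, T2) \<Rightarrow>
     a \<le> b \<and> v a \<noteq> 0 \<and> v b = v a * cis (T2 - T1) \<and> g b - g a = v a * (P2 - P1) / cis T1)"

lemma cis_split3: "cis (T3 - T1) = cis (T2 - T1) * cis (T3 - T2)"
  by (simp add: cis_mult)

lemma good_concat:
  assumes "good A (P1,T1) (P2,T2)" "good B (P2,T2) (P3,T3)"
  shows "good (concat_arc A B) (P1,T1) (P3,T3)"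
proof -
  obtain f1 u1 a1 b1 where A: "A = (f1,u1,a1,b1)" by (cases A) auto
  obtain f2 u2 a2 b2 where B: "B = (f2,u2,a2,b2)" by (cases B) auto
  have h1: "a1 \<le> b1" "u1 a1 \<noteq> 0" "u1 b1 = u1 a1 * cis (T2 - T1)"
     "f1 b1 - f1 a1 = u1 a1 * (P2 - P1) / cis T1" using assms(1) by (auto simp: good_def A)
  have h2: "a2 \<le> b2" "u2 a2 \<noteq> 0" "u2 b2 = u2 a2 * cis (T3 - T2)"
     "f2 b2 - f2 a2 = u2 a2 * (P3 - P2) / cis T2" using assms(2) by (auto simp: good_def B)
  have c3: "cis (T3 - T1) = cis (T2 - T1) * cis (T3 - T2)" by (rule cis_split3)
  have c5: "cis (T2 - T1) = cis T2 / cis T1" by (simp add: cis_divide)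
  have c4: "cis (T2 - T1) / cis T2 = 1 / cis T1" unfolding c5 by (simp add: field_simps)
  show ?thesis
  proof (cases "b2 = a2")
    case True
    with h2 have e1: "cis (T3 - T2) = 1" using h2(2) by auto
    from True h2 have e2: "P3 = P2" by auto
    show ?thesis using h1 h2 True e1 e2 c3
      by (simp add: good_def A B concat_arc_def Let_def)
  next
    case False
    then have "b2 > a2" using h2 by auto
    then have nl: "\<not> (b1 - a1 + (b2 - a2) \<le> b1 - a1)" by auto
    have "f1 b1 + u1 b1 / u2 a2 * (f2 b2 - f2 a2) - f1 a1 = u1 a1 * (P3 - P1) / cis T1"
    proof -
      have "u1 b1 / u2 a2 * (f2 b2 - f2 a2) = u1 b1 / u2 a2 * (u2 a2 * (P3 - P2) / cis T2)"
        using h2(4) by simp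
      also have "\<dots> = u1 b1 * (P3 - P2) / cis T2" using h2(2) by simp
      also have "\<dots> = u1 a1 * (cis (T2 - T1) / cis T2) * (P3 - P2)" unfolding h1(3) by simp
      also have "\<dots> = u1 a1 * (P3 - P2) / cis T1" using c4 by simp
      finally have "u1 b1 / u2 a2 * (f2 b2 - f2 a2) = u1 a1 * (P3 - P2) / cis T1" .
      moreover have "f1 b1 = f1 a1 + u1 a1 * (P2 - P1) / cis T1" using h1(4) by (simp add: algebra_simps)
      moreover have "u1 a1 * (P3 - P1) / cis T1 = u1 a1 * (P2 - P1) / cis T1 + u1 a1 * (P3 - P2) / cis T1"
        by (simp add: add_divide_distrib[symmetric] algebra_simps)
      ultimately show ?thesis by simp
    qed
    moreover have "u1 b1 / u2 a2 * u2 b2 = u1 a1 * cis (T3 - T1)"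
      using h1(3) h2(3) h2(2) c3 by simp
    ultimately show ?thesis using h1 h2 nl
      by (simp add: good_def A B concat_arc_def Let_def)
  qed
qed

lemma good_chain:
  "length Ps = Suc (length As) \<Longrightarrow> As \<noteq> [] \<Longrightarrow> (\<forall>i<length As. good (As!i) (Ps!i) (Ps!Suc i))
   \<Longrightarrow> good (concat_list As) (hd Ps) (last Ps)"
proof (induction As arbitrary: Ps rule: concat_list.induct)
  case 1 then show ?case by simp
next
  case (2 A)
  then obtain X Y where "Ps = [X, Y]" by (cases Ps; cases "tl Ps"; auto)
  with 2 show ?case by auto
next
  case (3 A B As)
  then obtain X Ps' where Ps: "Ps = X # Ps'" by (cases Ps) auto
  have IH: "good (concat_list (B # As)) (hd Ps') (last Ps')"
    using 3 Ps by (intro "3.IH") (auto simp: nth_Cons_Suc)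
  have ne: "Ps' \<noteq> []" using 3 Ps by auto
  have g1: "good A X (hd Ps')" using "3.prems"(3) Ps ne
    by (cases Ps') (auto elim!: allE[where x=0])
  obtain P1 T1 where X: "X = (P1,T1)" by (cases X)
  obtain P2 T2 where H: "hd Ps' = (P2,T2)" by (cases "hd Ps'")
  obtain P3 T3 where L: "last Ps' = (P3,T3)" by (cases "last Ps'")
  have "good (concat_arc A (concat_list (B # As))) X (last Ps')"
    using good_concat[of A P1 T1 P2 T2 "concat_list (B # As)" P3 T3] g1 IH X H L by simp
  moreover have "Ps' \<noteq> []" using 3 Ps by auto
  ultimately show ?case using Ps by simp
qed


lemma good_shift:
  assumes "good A (P1,T1) (P2,T2)" "cis d = 1"
  shows "good A (P1 + w, T1 + d) (P2 + w, T2 + d)"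
proof -
  have "cis (T1 + d) = cis T1" using assms(2) by (simp add: cis_mult[symmetric])
  then show ?thesis using assms(1) by (cases A) (simp add: good_def)
qed

lemma cut_pt_mono:
  assumes "C \<in> cuts k" "i \<le> j"
  shows "cut_pt C k i \<le> cut_pt C k j"
proof -
  have H: "\<And>i j. 1 \<le> i \<Longrightarrow> i \<le> j \<Longrightarrow> j \<le> k - 1 \<Longrightarrow> 0 \<le> C i \<and> C i \<le> C j \<and> C j \<le> 1"
    using assms(1) unfolding cuts_def by blast
  show ?thesis
  proof (cases "i = 0")
    case True
    then show ?thesis using H[of j j] by (auto simp: cut_pt_def)
  next
    case False
    then show ?thesis using H[of i j] H[of i i] assms(2) by (auto simp: cut_pt_def)
  qed
qed

lemma good_piece:
  assumes "C \<in> cuts k" "1 \<le> j"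
  shows "good (arc_piece \<gamma> \<theta> C k j) (\<gamma> (cut_pt C k (j-1)), \<theta> (cut_pt C k (j-1)))
            (\<gamma> (cut_pt C k j), \<theta> (cut_pt C k j))"
proof -
  have "cut_pt C k (j-1) \<le> cut_pt C k j" using cut_pt_mono[OF assms(1)] by simp
  then show ?thesis
    by (simp add: arc_piece_def good_def cis_divide[symmetric])
qed

theorem lemma4p2:
  fixes \<gamma> :: "real \<Rightarrow> complex" and \<theta> :: "real \<Rightarrow> real" and c :: real
    and m :: int and k h :: nat and C :: "nat \<Rightarrow> real"
  assumes "\<gamma> C1_differentiable_on {0..1}"
    and "c > 0"
    and "turning_angle \<gamma> c \<theta>"
    and "\<gamma> 0 \<noteq> \<gamma> 1"
    and "\<theta> 1 - \<theta> 0 = 2 * pi * of_int m"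
    and "m \<noteq> 0"
    and "k \<ge> 2"
    and "h < k"
    and "C \<in> cuts k"
  shows "r_perm \<gamma> \<theta> (zshift k h) k C 0 \<noteq> r_perm \<gamma> \<theta> (zshift k h) k C 1"
proof -
  define cp where "cp = cut_pt C k"
  define d where "d = \<theta> 1 - \<theta> 0"
  define w where "w = \<gamma> 1 - \<gamma> 0"
  have cd: "cis d = 1" unfolding d_def assms(5) by (simp add: cis_multiple_2pi)
  define Q where "Q i = (if i \<le> k - h then (\<gamma> (cp (i+h)), \<theta> (cp (i+h)))
      else (\<gamma> (cp (i+h-k)) + w, \<theta> (cp (i+h-k)) + d))" for i
  define Ps where "Ps = map Q [0..<k+1]"
  define As where "As = map (\<lambda>j. arc_piece \<gamma> \<theta> C k (zshift k h j)) [1..<k+1]"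
  have cp0: "cp 0 = 0" and cpk: "cp k = 1" using assms(7) by (auto simp: cp_def cut_pt_def)
  have lens: "length Ps = Suc (length As)" by (simp add: Ps_def As_def del: upt_Suc)
  have ne: "As \<noteq> []" using assms(7) by (simp add: As_def)
  have steps: "\<forall>i<length As. good (As!i) (Ps!i) (Ps!Suc i)"
  proof (intro allI impI)
    fix i assume "i < length As"
    then have ik: "i < k" by (simp add: As_def del: upt_Suc)
    have Ai: "As!i = arc_piece \<gamma> \<theta> C k (zshift k h (Suc i))"
      using ik by (simp add: As_def nth_map_upt del: upt_Suc)
    have Pi: "Ps!i = Q i" "Ps!Suc i = Q (Suc i)" using ik by (simp_all add: Ps_def nth_map_upt del: upt_Suc)
    show "good (As!i) (Ps!i) (Ps!Suc i)"
    proof (cases "Suc i \<le> k - h")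
      case True
      then have z: "zshift k h (Suc i) = Suc i + h" by (simp add: zshift_def)
      show ?thesis using good_piece[OF assms(9), of "Suc i + h" \<gamma> \<theta>] True
        unfolding Ai Pi z by (simp add: Q_def cp_def)
    next
      case False
      then have z: "zshift k h (Suc i) = Suc i + h - k" by (simp add: zshift_def)
      have g: "good (As!i) (\<gamma> (cp (i+h-k)) + w, \<theta> (cp (i+h-k)) + d) (\<gamma> (cp (Suc i+h-k)) + w, \<theta> (cp (Suc i+h-k)) + d)"
        using good_shift[OF good_piece[OF assms(9), of "Suc i + h - k" \<gamma> \<theta>] cd, of w] False
        unfolding Ai z cp_def by (simp add: Suc_diff_le)
      show ?thesis
      proof (cases "i = k - h")
        case True
        have "Q i = (\<gamma> (cp (i+h-k)) + w, \<theta> (cp (i+h-k)) + d)"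
          using True assms(8) cp0 cpk by (simp add: Q_def w_def d_def)
        then show ?thesis using g False by (simp add: Pi Q_def)
      next
        case False
        then show ?thesis using g `\<not> Suc i \<le> k - h` by (simp add: Pi Q_def)
      qed
    qed
  qed
  have G: "good (concat_list As) (hd Ps) (last Ps)" by (rule good_chain[OF lens ne steps])
  have hd: "hd Ps = (\<gamma> (cp h), \<theta> (cp h))" by (simp add: Ps_def Q_def hd_map del: upt_Suc)
  have lastP: "last Ps = Q k" by (simp add: Ps_def last_map del: upt_Suc)
  have lastQ: "fst (Q k) = \<gamma> (cp h) + w"
    using assms(8) cp0 cpk by (cases "h = 0") (auto simp: Q_def w_def)
  obtain g v a b where cl: "concat_list As = (g, v, a, b)" by (cases "concat_list As") auto
  obtain T2 where lastT: "last Ps = (\<gamma> (cp h) + w, T2)" using lastP lastQ by (cases "Q k") auto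
  have "v a \<noteq> 0" "g b - g a = v a * w / cis (\<theta> (cp h))"
    using G unfolding cl hd lastT by (auto simp: good_def)
  moreover have "w \<noteq> 0" using assms(4) by (simp add: w_def)
  ultimately have "g b \<noteq> g a" by auto
  moreover have "r_perm \<gamma> \<theta> (zshift k h) k C 0 = g a" "r_perm \<gamma> \<theta> (zshift k h) k C 1 = g b"
    unfolding r_perm_def As_def[symmetric] cl by simp_all
  ultimately show ?thesis by simp
qed

end
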